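(* Let $m$ be a non-zero integer and $n$ any integer. Then \[ \sum_{k = 1}^n L_{mk}^{\,4} = \frac{F_{2mn+m}\left(L_{2mn + m} + 4( - 1)^{mn} L_m \right)}{F_{2m}} + 6n-5\,. \]
   Context: $F_i$ and $L_i$ denote the Fibonacci and Lucas numbers, defined for all $i\in\mathbb{Z}$ by $F_i=F_{i-1}+F_{i-2}$, $F_0=0$, $F_1=1$, and $L_i=L_{i-1}+L_{i-2}$, $L_0=2$, $L_1=1$; equivalently $F_{-i}=(-1)^{i-1}F_i$ and $L_{-i}=(-1)^iL_i$. Summation convention for an arbitrary integer upper limit: $\sum_{k=a}^{a-1} f(k)=0$, and for $n<a-1$, $\sum_{k=a}^{n} f(k) = -\sum_{k=n+1}^{a-1} f(k)$. *)

theory Defs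
  imports Complex_Main
begin

fun fibn :: "nat \<Rightarrow> int" where
  "fibn 0 = 0"
| "fibn (Suc 0) = 1"
| "fibn (Suc (Suc n)) = fibn (Suc n) + fibn n"

fun lucn :: "nat \<Rightarrow> int" where
  "lucn 0 = 2"
| "lucn (Suc 0) = 1"
| "lucn (Suc (Suc n)) = lucn (Suc n) + lucn n"

definition F :: "int \<Rightarrow> int" where
  "F i = (if 0 \<le> i then fibn (nat i) else (-1) ^ (nat (-i) - 1) * fibn (nat (-i)))"

definition L :: "int \<Rightarrow> int" where
  "L i = (if 0 \<le> i then lucn (nat i) else (-1) ^ (nat (-i)) * lucn (nat (-i)))"

text \<open>Sum over k = a..n with arbitrary integer upper limit n:
  empty for n = a - 1, and for n < a - 1 equal to minus the sum over k = n+1..a-1.\<close>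
definition isum :: "int \<Rightarrow> int \<Rightarrow> (int \<Rightarrow> 'a::ab_group_add) \<Rightarrow> 'a" where
  "isum a n f = (if a - 1 \<le> n then (\<Sum>k\<in>{a..n}. f k) else - (\<Sum>k\<in>{n+1..a-1}. f k))"

end

theory Submission
  imports Defs
begin

definition phi :: real where "phi = (1 + sqrt 5) / 2"
definition psi :: real where "psi = (1 - sqrt 5) / 2"

lemma s5: "sqrt 5 * sqrt 5 = (5::real)" by simp

lemma phi2: "phi^2 = phi + 1" unfolding phi_def power2_eq_square
  by (simp add: field_simps s5)
lemma psi2: "psi^2 = psi + 1" unfolding psi_def power2_eq_square
  by (simp add: field_simps s5 algebra_simps)
lemma phipsi: "phi * psi = -1" unfolding phi_def psi_def
  by (simp add: field_simps s5 algebra_simps)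
lemma phi_nz: "phi \<noteq> 0" using phipsi by auto
lemma psi_nz: "psi \<noteq> 0" using phipsi by auto
lemma phimpsi: "phi - psi = sqrt 5" unfolding phi_def psi_def by (simp add: field_simps)

lemma binet_nat: "real_of_int (fibn k) = (phi^k - psi^k) / sqrt 5 \<and> real_of_int (lucn k) = phi^k + psi^k"
proof (induction k rule: nat_less_induct)
  case (1 k)
  show ?case
  proof (cases k)
    case 0 then show ?thesis by (simp add: phi_def psi_def)
  next
    case (Suc j)
    show ?thesis
    proof (cases j)
      case 0 then show ?thesis using Suc by (simp add: phi_def psi_def field_simps)
    next
      case (Suc i)
      have "phi ^ Suc (Suc i) = phi^2 * phi^i" by (simp add: power2_eq_square)
      also have "\<dots> = (phi + 1) * phi^i" using phi2 by simp
      finally have a: "phi ^ Suc (Suc i) = phi ^ Suc i + phi ^ i" by (simp add: algebra_simps)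
      have "psi ^ Suc (Suc i) = psi^2 * psi^i" by (simp add: power2_eq_square)
      also have "\<dots> = (psi + 1) * psi^i" using psi2 by simp
      finally have b: "psi ^ Suc (Suc i) = psi ^ Suc i + psi ^ i" by (simp add: algebra_simps)
      have ih1: "real_of_int (fibn (Suc i)) = (phi^Suc i - psi^Suc i) / sqrt 5 \<and> real_of_int (lucn (Suc i)) = phi^Suc i + psi^Suc i"
        using 1 Suc \<open>k = Suc j\<close> by auto
      have ih2: "real_of_int (fibn i) = (phi^i - psi^i) / sqrt 5 \<and> real_of_int (lucn i) = phi^i + psi^i"
        using 1 Suc \<open>k = Suc j\<close> by auto
      show ?thesis using ih1 ih2 a b Suc \<open>k = Suc j\<close> by (simp add: field_simps)
    qed
  qed
qed

lemma inv_phi_pow: "inverse (phi ^ j) = (-1)^j * psi ^ j"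
proof -
  have "(-(phi*psi))^j = (-1)^j * (phi^j * psi^j)" by (simp only: power_minus[of "phi*psi"] power_mult_distrib)
  moreover have "-(phi*psi) = 1" using phipsi by simp
  ultimately have "phi ^ j * ((-1)^j * psi ^ j) = 1" by (simp add: algebra_simps)
  then show ?thesis by (metis inverse_unique)
qed

lemma inv_psi_pow: "inverse (psi ^ j) = (-1)^j * phi ^ j"
proof -
  have "(-(phi*psi))^j = (-1)^j * (phi^j * psi^j)" by (simp only: power_minus[of "phi*psi"] power_mult_distrib)
  moreover have "-(phi*psi) = 1" using phipsi by simp
  ultimately have "psi ^ j * ((-1)^j * phi ^ j) = 1" by (simp add: algebra_simps)
  then show ?thesis by (metis inverse_unique)
qed

lemma binetF: "real_of_int (F i) = (phi powi i - psi powi i) / sqrt 5"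
proof (cases "0 \<le> i")
  case True then show ?thesis using binet_nat[of "nat i"]
    by (simp add: F_def power_int_def)
next
  case False
  define j where "j = nat (-i)"
  have j: "j > 0" "i = - int j" using False by (auto simp: j_def)
  have "phi powi i = (-1)^j * psi ^ j" using j inv_phi_pow
    by (simp add: power_int_minus)
  moreover have "psi powi i = (-1)^j * phi ^ j" using j inv_psi_pow
    by (simp add: power_int_minus)
  moreover have "(-1::real)^(j-1) = - ((-1)^j)" using j
    by (metis Suc_diff_1 mult_minus1 power_Suc minus_minus)
  moreover have "phi ^ j = psi ^ j + real_of_int (fibn j) * sqrt 5"
    using binet_nat[of j] by (simp add: field_simps)
  ultimately show ?thesis using False j
    by (simp add: F_def j_def[symmetric] field_simps)
qed

lemma binetL: "real_of_int (L i) = phi powi i + psi powi i"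
proof (cases "0 \<le> i")
  case True then show ?thesis using binet_nat[of "nat i"]
    by (simp add: L_def power_int_def)
next
  case False
  define j where "j = nat (-i)"
  have j: "j > 0" "i = - int j" using False by (auto simp: j_def)
  have "phi powi i = (-1)^j * psi ^ j" using j inv_phi_pow
    by (simp add: power_int_minus)
  moreover have "psi powi i = (-1)^j * phi ^ j" using j inv_psi_pow
    by (simp add: power_int_minus)
  ultimately show ?thesis using False binet_nat[of j] j
    by (simp add: L_def j_def[symmetric] field_simps)
qed


lemma algp:
  fixes a b p q s t :: real
  assumes "a*b = s" "p*q = t" "s = 1 \<or> s = -1" "t = 1 \<or> t = -1"
  shows "(a^2*p-b^2*q)*(a^2*p+b^2*q+4*s*(p+q)) - (a^2*q*t - b^2*p*t)*(a^2*q*t+b^2*p*t+4*(s*t)*(p+q)) + 6*(p^2-q^2)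
     = (a+b)^4 * (p^2-q^2)"
proof -
  have e: "(a+b)^4 = a^4 + 4*a^2*(a*b) + 6*(a*b)^2 + 4*b^2*(a*b) + b^4"
    by (simp add: power2_eq_square power4_eq_xxxx algebra_simps)
  have t2: "t*t = 1" "t*(t*x) = x" for x using assms(4) by auto
  have s2: "s*s = 1" "s*(s*x) = x" for x using assms(3) by auto
  show ?thesis unfolding e assms(1)
    by (simp add: algebra_simps power2_eq_square power4_eq_xxxx t2 s2)
qed

lemma canc: "z \<noteq> 0 \<Longrightarrow> (x / sqrt 5) * y / (z / sqrt 5) - (u / sqrt 5) * v / (z / sqrt 5) + 6
   = (x * y - u * v + 6 * z) / (z::real)"
  by (simp add: field_simps)

lemma m1: "(-1::real) powi k = 1 \<or> (-1::real) powi k = -1"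
  by (cases "even k") (auto simp: power_int_minus_left)

lemma m1pp: "(-1::real) powi k = phi powi k * psi powi k"
  using phipsi by (metis power_int_mult_distrib)

lemma pw1: "(x::real) \<noteq> 0 \<Longrightarrow> x powi (2*m*n+m) = (x powi (m*n))^2 * x powi m"
proof -
  assume x: "x \<noteq> 0"
  have "x powi (2*m*n+m) = x powi ((m*n)*2 + m)" by (rule arg_cong[where f="power_int x"]) simp
  also have "\<dots> = x powi ((m*n)*2) * x powi m" using x by (rule power_int_add[OF disjI1])
  also have "\<dots> = (x powi (m*n)) powi 2 * x powi m" by (subst power_int_mult[of x "m*n" 2]) simp
  finally show ?thesis by simp
qed

lemma pw2: "(x::real) \<noteq> 0 \<Longrightarrow> x powi (2*m*(n-1)+m) = (x powi (m*n))^2 / x powi m"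
proof -
  assume x: "x \<noteq> 0"
  have "x powi (2*m*(n-1)+m) = x powi ((m*n)*2 - m)" by (rule arg_cong[where f="power_int x"]) (simp add: algebra_simps)
  also have "\<dots> = x powi ((m*n)*2) / x powi m" using x by (rule power_int_diff[OF disjI1])
  also have "\<dots> = (x powi (m*n)) powi 2 / x powi m" by (subst power_int_mult[of x "m*n" 2]) simp
  finally show ?thesis by simp
qed

lemma pw3: "(x::real) powi (2*m) = (x powi m)^2"
proof -
  have "x powi (2*m) = x powi (m*2)" by (rule arg_cong[where f="power_int x"]) simp
  also have "\<dots> = (x powi m) powi 2" by (subst power_int_mult[of x m 2]) simp
  finally show ?thesis by simp
qed

lemma pw4: "(x::real) \<noteq> 0 \<Longrightarrow> x powi (m*(n-1)) = x powi (m*n) / x powi m"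
proof -
  assume x: "x \<noteq> 0"
  have "x powi (m*(n-1)) = x powi (m*n - m)" by (rule arg_cong[where f="power_int x"]) (simp add: algebra_simps)
  also have "\<dots> = x powi (m*n) / x powi m" using x by (rule power_int_diff[OF disjI1])
  finally show ?thesis .
qed


lemma fib_pos: "fibn k \<ge> 0 \<and> fibn (Suc k) > 0"
  by (induction k) auto

lemma F2m_nz: "m \<noteq> 0 \<Longrightarrow> F (2*m) \<noteq> 0"
proof -
  assume m: "m \<noteq> 0"
  have "fibn j \<noteq> 0" if "j > 0" for j
    using fib_pos[of "j - 1"] that by (cases j) auto
  then show ?thesis using m by (auto simp: F_def)
qed

lemma isum_step: "isum 1 n f - isum 1 (n-1) f = (f n :: 'a::ab_group_add)"
proof -
  consider "n \<ge> 1" | "n = 0" | "n < 0" by linarith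
  then show ?thesis
  proof cases
    case 1
    have e: "{1..n} = insert n {1..n-1}" using 1 by auto
    show ?thesis using 1 by (simp add: isum_def e)
  next
    case 2
    then show ?thesis by (simp add: isum_def)
  next
    case 3
    have e: "{n..0} = insert n {n+1..0}" using 3 by auto
    show ?thesis using 3 by (simp add: isum_def e)
  qed
qed

lemma isum_unique:
  fixes g :: "int \<Rightarrow> 'a::ab_group_add"
  assumes g0: "g 0 = 0" and st: "\<And>n. g n - g (n-1) = f n"
  shows "g n = isum 1 n f"
proof (induction n rule: int_induct[where k=0])
  case base
  then show ?case using g0 by (simp add: isum_def)
next
  case (step1 i)
  have "g (i+1) - g i = f (i+1)" using st[of "i+1"] by simp
  moreover have "isum 1 (i+1) f - isum 1 i f = f (i+1)" using isum_step[of "i+1" f] by simp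
  ultimately show ?case using step1 by (metis diff_eq_eq)
next
  case (step2 i)
  have "g i - g (i-1) = f i" using st[of i] by simp
  moreover have "isum 1 i f - isum 1 (i-1) f = f i" using isum_step[of i f] by simp
  ultimately show ?case using step2 by (metis diff_eq_eq add_left_cancel diff_add_cancel)
qed


definition R :: "int \<Rightarrow> int \<Rightarrow> real" where
  "R m n = real_of_int (F (2*m*n + m)) * (real_of_int (L (2*m*n + m)) + 4 * ((-1::real) powi (m * n)) * real_of_int (L m))
      / real_of_int (F (2*m)) + 6 * real_of_int n - 5"

lemma R_step:
  assumes "m \<noteq> 0"
  shows "R m n - R m (n-1) = real_of_int ((L (m * n)) ^ 4)"
proof -
  define a where "a = phi powi (m*n)"
  define b where "b = psi powi (m*n)"
  define p where "p = phi powi m"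
  define q where "q = psi powi m"
  define s where "s = (-1::real) powi (m*n)"
  define t where "t = (-1::real) powi m"
  have ab: "a*b = s" unfolding a_def b_def s_def by (simp add: m1pp)
  have pq: "p*q = t" unfolding p_def q_def t_def by (simp add: m1pp)
  have s1: "s = 1 \<or> s = -1" unfolding s_def by (rule m1)
  have t1: "t = 1 \<or> t = -1" unfolding t_def by (rule m1)
  have pnz: "p \<noteq> 0" unfolding p_def using phi_nz by simp
  have qnz: "q \<noteq> 0" unfolding q_def using psi_nz by simp
  have ip: "1/p = q*t" using pq t1 pnz by (auto simp: field_simps)
  have iq: "1/q = p*t" using pq t1 qnz by (auto simp: field_simps)
  have F1: "real_of_int (F (2*m*n+m)) = (a^2*p - b^2*q)/sqrt 5"
    unfolding binetF a_def b_def p_def q_def using pw1 phi_nz psi_nz by simp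
  have L1: "real_of_int (L (2*m*n+m)) = a^2*p + b^2*q"
    unfolding binetL a_def b_def p_def q_def using pw1 phi_nz psi_nz by simp
  have F0: "real_of_int (F (2*m*(n-1)+m)) = (a^2*q*t - b^2*p*t)/sqrt 5"
  proof -
    have "real_of_int (F (2*m*(n-1)+m)) = (a^2/p - b^2/q)/sqrt 5"
      unfolding binetF a_def b_def p_def q_def using pw2 phi_nz psi_nz by simp
    also have "\<dots> = (a^2*(1/p) - b^2*(1/q))/sqrt 5" by simp
    finally show ?thesis unfolding ip iq by (simp add: algebra_simps)
  qed
  have L0: "real_of_int (L (2*m*(n-1)+m)) = a^2*q*t + b^2*p*t"
  proof -
    have "real_of_int (L (2*m*(n-1)+m)) = a^2*(1/p) + b^2*(1/q)"
      unfolding binetL a_def b_def p_def q_def using pw2 phi_nz psi_nz by simp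
    then show ?thesis unfolding ip iq by (simp add: algebra_simps)
  qed
  have Lm: "real_of_int (L m) = p + q" unfolding binetL p_def q_def ..
  have F2: "real_of_int (F (2*m)) = (p^2 - q^2)/sqrt 5"
    unfolding binetF p_def q_def pw3 ..
  have Lmn: "real_of_int (L (m*n)) = a + b" unfolding binetL a_def b_def ..
  have s0: "(-1::real) powi (m*(n-1)) = s*t"
  proof -
    have "(-1::real) powi (m*(n-1)) = s / t" unfolding s_def t_def by (rule pw4) simp
    then show ?thesis using t1 by auto
  qed
  have D: "p^2 - q^2 \<noteq> 0" using F2 F2m_nz[OF assms] by auto
  define X1 where "X1 = ((a^2*p - b^2*q)/sqrt 5) * (a^2*p + b^2*q + 4*s*(p+q)) / ((p^2 - q^2)/sqrt 5)"
  define X0 where "X0 = ((a^2*q*t - b^2*p*t)/sqrt 5) * (a^2*q*t + b^2*p*t + 4*(s*t)*(p+q)) / ((p^2 - q^2)/sqrt 5)"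
  have R1: "R m n = X1 + 6 * real_of_int n - 5"
    unfolding R_def F1 L1 Lm F2 s_def[symmetric] X1_def by (rule refl)
  have R0: "R m (n-1) = X0 + 6 * real_of_int (n-1) - 5"
    unfolding R_def F0 L0 Lm F2 s0 X0_def by (rule refl)
  have "R m n - R m (n-1) = X1 - X0 + 6"
    unfolding R1 R0 by simp
  also have "\<dots> =
     ((a^2*p - b^2*q)/sqrt 5) * (a^2*p + b^2*q + 4*s*(p+q)) / ((p^2 - q^2)/sqrt 5)
   - ((a^2*q*t - b^2*p*t)/sqrt 5) * (a^2*q*t + b^2*p*t + 4*(s*t)*(p+q)) / ((p^2 - q^2)/sqrt 5) + 6"
    unfolding X1_def X0_def ..
  also have "\<dots> = ((a^2*p - b^2*q) * (a^2*p + b^2*q + 4*s*(p+q))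
     - (a^2*q*t - b^2*p*t) * (a^2*q*t + b^2*p*t + 4*(s*t)*(p+q)) + 6*(p^2-q^2)) / (p^2-q^2)"
    using D by (rule canc)
  also have "\<dots> = (a+b)^4" unfolding algp[OF ab pq s1 t1] using D by (rule nonzero_mult_div_cancel_right)
  finally show ?thesis unfolding of_int_power Lmn .
qed

theorem theorem2:
  fixes m n :: int
  assumes "m \<noteq> 0"
  shows "real_of_int (isum 1 n (\<lambda>k. (L (m * k)) ^ 4)) =
    real_of_int (F (2*m*n + m)) * (real_of_int (L (2*m*n + m)) + 4 * ((-1::real) powi (m * n)) * real_of_int (L m))
      / real_of_int (F (2*m)) + 6 * real_of_int n - 5"
proof -
  have FL: "real_of_int (F (2*m)) = real_of_int (F m) * real_of_int (L m)"
    unfolding binetF binetL pw3 by (simp add: field_simps power2_eq_square)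
  have nz: "real_of_int (F (2*m)) \<noteq> 0" using F2m_nz[OF assms] by simp
  have R0: "R m 0 = 0"
  proof -
    have "R m 0 = real_of_int (F m) * (real_of_int (L m) + 4 * real_of_int (L m)) / real_of_int (F (2*m)) - 5"
      unfolding R_def by simp
    also have "\<dots> = 5 * (real_of_int (F m) * real_of_int (L m)) / real_of_int (F (2*m)) - 5"
      by (simp add: algebra_simps)
    also have "\<dots> = 0" unfolding FL[symmetric] using nz by simp
    finally show ?thesis .
  qed
  have st: "R m k - R m (k-1) = real_of_int ((L (m * k)) ^ 4)" for k
    by (rule R_step[OF assms])
  have "R m n = isum 1 n (\<lambda>k. real_of_int ((L (m * k)) ^ 4))"
    by (rule isum_unique[where g="R m", OF R0 st])
  moreover have "isum 1 n (\<lambda>k. real_of_int ((L (m * k)) ^ 4)) = real_of_int (isum 1 n (\<lambda>k. (L (m * k)) ^ 4))"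
    by (simp add: isum_def)
  ultimately have "real_of_int (isum 1 n (\<lambda>k. (L (m * k)) ^ 4)) = R m n" by simp
  then show ?thesis by (simp only: R_def)
qed

end
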